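(* Let $n\ge1$, $q\in[0,1]$, and let $\mu_q$ be the probability distribution on $\{z\in\{0,1\}^{2n}:\mathrm{wt}(z)=n\}$ defined by $\mu_q(z)\propto q^{-2A(z)}$ if $0<q\le1$, and $\mu_0=\delta_{z,0^n1^n}$. Then for every $w\in\{1,\dots,2n\}$, $$\mu_q\Bigl(\#\{k\le w: z_k=1\}\;\le\;\#\{k\le w-1:z_k=0\}\Bigr)\;\ge\;\tfrac12 .$$ (Geometrically: in the state $\sum_z q^{-A(z)}|x,z\rangle_V$, the $w$-th particle is found in the left half of the grid with probability at least $1/2$.)
   Context: $A(z)=\sum_{j=1}^{2n}jz_j-\frac{n(n+1)}{2}$ for $z\in\{0,1\}^{2n}$ of Hamming weight $n$. A string $z$ is identified with the monotone lattice path in the rotated $n\times n$ grid from the top vertex $(0,0)$ to the bottom vertex $(n,n)$ whose $k$-th step goes from $(i,j)$ to $(i+1-z_k,j+z_k)$; $A(z)$ is the number of unit squares of the grid lying to the right of this path. The $w$-th step (edge) has horizontal coordinate $t=n+j-i+z_w$, where $(i,j)$ is its starting vertex, and lies in the left half of the grid iff $t\le n$, which is exactly the displayed event. *)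

theory Defs
  imports Complex_Main
begin

text \<open>Binary strings z in {0,1}^(2n) of Hamming weight n, represented as lists of
  naturals with entries in {0,1}; the k-th coordinate z_k (1-based) is z ! (k-1).\<close>
definition balanced_strings :: "nat \<Rightarrow> nat list set" where
  "balanced_strings n = {z. length z = 2 * n \<and> set z \<subseteq> {0, 1} \<and> sum_list z = n}"

definition Aval :: "nat \<Rightarrow> nat list \<Rightarrow> int" where
  "Aval n z = (\<Sum>j = 1..2 * n. int j * int (z ! (j - 1))) - int (n * (n + 1) div 2)"

definition mu :: "real \<Rightarrow> nat \<Rightarrow> (nat list \<Rightarrow> bool) \<Rightarrow> real" where
  "mu q n E =
     (if q = 0 then (if E (replicate n 0 @ replicate n 1) then 1 else 0)
      else (\<Sum>z\<in>{z \<in> balanced_strings n. E z}. q powi (- 2 * Aval n z))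
           / (\<Sum>z\<in>balanced_strings n. q powi (- 2 * Aval n z)))"

end

theory Submission
  imports Defs
begin

definition sg :: "nat list \<Rightarrow> nat \<Rightarrow> int" where
  "sg z i = 2 * int (z ! i) - 1"

definition ht :: "nat list \<Rightarrow> nat \<Rightarrow> int" where
  "ht z k = (\<Sum>i<k. sg z i)"

definition t0 :: "nat \<Rightarrow> nat list \<Rightarrow> nat" where
  "t0 p z = Max {k. k \<le> p \<and> ht z k = 0}"

definition t1 :: "nat \<Rightarrow> nat list \<Rightarrow> nat" where
  "t1 p z = Min {k. p < k \<and> k \<le> length z \<and> ht z k = 0}"

definition flipab :: "nat \<Rightarrow> nat \<Rightarrow> nat list \<Rightarrow> nat list" where
  "flipab a b z = map (\<lambda>i. if a \<le> i \<and> i < b then 1 - z ! i else z ! i) [0..<length z]"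

definition flip :: "nat \<Rightarrow> nat list \<Rightarrow> nat list" where
  "flip p z = flipab (t0 p z) (t1 p z) z"

definition binary :: "nat list \<Rightarrow> bool" where
  "binary z = (\<forall>i<length z. z ! i \<le> 1)"

lemma ht_0[simp]: "ht z 0 = 0" by (simp add: ht_def)

lemma ht_Suc: "ht z (Suc k) = ht z k + sg z k"
  by (simp add: ht_def)

lemma ht_sum: "ht z k = 2 * (\<Sum>i<k. int (z ! i)) - int k"
  by (induction k) (auto simp: ht_Suc sg_def)

lemma bal_binary: "z \<in> balanced_strings n \<Longrightarrow> binary z"
  unfolding balanced_strings_def binary_def
proof (intro allI impI)
  fix i assume "z \<in> {z. length z = 2 * n \<and> set z \<subseteq> {0, 1} \<and> sum_list z = n}" "i < length z"
  then have "z ! i \<in> {0, 1}" using nth_mem by blast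
  then show "z ! i \<le> 1" by auto
qed

lemma ht_len: assumes "z \<in> balanced_strings n" shows "ht z (length z) = 0"
proof -
  have "(\<Sum>i<length z. int (z ! i)) = int (sum_list z)"
    by (simp add: sum_list_sum_nth atLeast0LessThan flip: of_nat_sum)
  with assms show ?thesis by (simp add: ht_sum balanced_strings_def)
qed

lemma t0_props:
  shows "t0 p z \<le> p" "ht z (t0 p z) = 0" "\<And>k. t0 p z < k \<Longrightarrow> k \<le> p \<Longrightarrow> ht z k \<noteq> 0"
proof -
  let ?S = "{k. k \<le> p \<and> ht z k = 0}"
  have fin: "finite ?S" by (rule finite_subset[of _ "{..p}"]) auto
  have ne: "0 \<in> ?S" by simp
  have "t0 p z \<in> ?S" unfolding t0_def using fin ne by (intro Max_in) auto
  thus "t0 p z \<le> p" "ht z (t0 p z) = 0" by auto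
  show "\<And>k. t0 p z < k \<Longrightarrow> k \<le> p \<Longrightarrow> ht z k \<noteq> 0"
    using Max_ge[OF fin] unfolding t0_def by fastforce
qed

lemma t1_props:
  assumes "p < length z" "ht z (length z) = 0"
  shows "p < t1 p z" "t1 p z \<le> length z" "ht z (t1 p z) = 0"
    "\<And>k. p < k \<Longrightarrow> k < t1 p z \<Longrightarrow> ht z k \<noteq> 0"
proof -
  let ?S = "{k. p < k \<and> k \<le> length z \<and> ht z k = 0}"
  have fin: "finite ?S" by (rule finite_subset[of _ "{..length z}"]) auto
  have ne: "length z \<in> ?S" using assms by simp
  have "t1 p z \<in> ?S" unfolding t1_def using fin ne by (intro Min_in) auto
  thus "p < t1 p z" "t1 p z \<le> length z" "ht z (t1 p z) = 0" by auto
  show "\<And>k. p < k \<Longrightarrow> k < t1 p z \<Longrightarrow> ht z k \<noteq> 0"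
  proof -
    fix k assume "p < k" "k < t1 p z"
    moreover have "k \<le> length z" using \<open>t1 p z \<le> length z\<close> \<open>k < t1 p z\<close> by simp
    ultimately show "ht z k \<noteq> 0" using Min_le[OF fin] unfolding t1_def by fastforce
  qed
qed

lemma flipab_len[simp]: "length (flipab a b z) = length z"
  by (simp add: flipab_def)

lemma flipab_nth: "i < length z \<Longrightarrow> flipab a b z ! i = (if a \<le> i \<and> i < b then 1 - z ! i else z ! i)"
  by (simp add: flipab_def)

lemma ht_flipab:
  assumes "binary z" "k \<le> length z" "a \<le> b"
  shows "ht (flipab a b z) k = ht z k - 2 * (ht z (min k b) - ht z (min k a))"
  using assms(2)
proof (induction k)
  case 0 then show ?case by simp
next
  case (Suc k)
  have zk: "z ! k \<le> 1" using assms(1) Suc.prems by (simp add: binary_def)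
  have s: "sg (flipab a b z) k = (if a \<le> k \<and> k < b then - sg z k else sg z k)"
    using Suc.prems zk by (auto simp: sg_def flipab_nth of_nat_diff)
  have IH: "ht (flipab a b z) k = ht z k - 2 * (ht z (min k b) - ht z (min k a))"
    using Suc by simp
  consider "k < a" | "a \<le> k \<and> k < b" | "b \<le> k" by linarith
  then show ?case
  proof cases
    case 1
    then have "min (Suc k) b = Suc k" "min (Suc k) a = Suc k" "min k b = k" "min k a = k"
      using assms(3) by auto
    then show ?thesis using IH s 1 by (simp add: ht_Suc)
  next
    case 2
    then have "min (Suc k) b = Suc k" "min (Suc k) a = a" "min k b = k" "min k a = a"
      by auto
    then show ?thesis using IH s 2 by (simp add: ht_Suc)
  next
    case 3
    then have "min (Suc k) b = b" "min (Suc k) a = a" "min k b = b" "min k a = a"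
      using assms(3) by auto
    then show ?thesis using IH s 3 by (simp add: ht_Suc)
  qed
qed


lemma ht_flipab0:
  assumes "binary z" "k \<le> length z" "a \<le> b" "ht z a = 0" "ht z b = 0"
  shows "ht (flipab a b z) k = (if a \<le> k \<and> k \<le> b then - ht z k else ht z k)"
proof -
  have e: "ht (flipab a b z) k = ht z k - 2 * (ht z (min k b) - ht z (min k a))"
    using ht_flipab[OF assms(1-3)] .
  consider "k < a" | "a \<le> k \<and> k \<le> b" | "b < k" by linarith
  then show ?thesis
  proof cases
    case 1 then have "min k b = k" "min k a = k" using assms(3) by auto
    then show ?thesis using e 1 by simp
  next
    case 2 then have "min k b = k" "min k a = a" by auto
    then show ?thesis using e 2 assms by simp
  next
    case 3 then have "min k b = b" "min k a = a" using assms(3) by auto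
    then show ?thesis using e 3 assms by simp
  qed
qed

lemma ht_flip_zero_iff:
  assumes "binary z" "k \<le> length z" "a \<le> b" "ht z a = 0" "ht z b = 0"
  shows "ht (flipab a b z) k = 0 \<longleftrightarrow> ht z k = 0"
  using ht_flipab0[OF assms] by simp

lemma flipab_binary: "binary z \<Longrightarrow> binary (flipab a b z)"
  by (auto simp: binary_def flipab_nth)

lemma flipab_flipab: "binary z \<Longrightarrow> flipab a b (flipab a b z) = z"
  by (rule nth_equalityI) (auto simp: binary_def flipab_nth)

lemma pos_run:
  fixes g :: "nat \<Rightarrow> int"
  assumes step: "\<And>k. a \<le> k \<Longrightarrow> k < b \<Longrightarrow> \<bar>g (Suc k) - g k\<bar> \<le> 1"
    and nz: "\<And>k. a < k \<Longrightarrow> k < b \<Longrightarrow> g k \<noteq> 0"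
    and start: "g (Suc a) > 0"
  shows "a < k \<Longrightarrow> k < b \<Longrightarrow> g k > 0"
proof (induction k)
  case 0 then show ?case by simp
next
  case (Suc k)
  show ?case
  proof (cases "k = a")
    case True then show ?thesis using start by simp
  next
    case False
    then have "a < k" using Suc.prems by simp
    then have "g k > 0" using Suc by simp
    moreover have "\<bar>g (Suc k) - g k\<bar> \<le> 1" using step \<open>a < k\<close> Suc.prems by simp
    moreover have "g (Suc k) \<noteq> 0" using nz Suc.prems by simp
    ultimately show ?thesis by linarith
  qed
qed

lemma sum_shift1: "(\<Sum>j = 1..m. f j) = (\<Sum>i<m. f (Suc i) :: int)"
  by (simp add: sum.atLeast1_atMost_eq)

lemma abel:
  assumes "a \<le> k"
  shows "(\<Sum>i\<in>{a..<k}. int (Suc i) * sg z i) = int k * ht z k - int a * ht z a - (\<Sum>i\<in>{a..<k}. ht z i)"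
  using assms
proof (induction k rule: dec_induct)
  case base then show ?case by simp
next
  case (step k)
  then show ?case by (simp add: ht_Suc algebra_simps)
qed

definition Ev :: "nat \<Rightarrow> nat list \<Rightarrow> bool" where
  "Ev p z = (ht z p + int (z ! p) \<le> 0)"

locale setting =
  fixes n p :: nat and z :: "nat list"
  assumes bal: "z \<in> balanced_strings n" and plen: "p < length z"
begin

abbreviation "a \<equiv> t0 p z"
abbreviation "b \<equiv> t1 p z"
abbreviation "z' \<equiv> flip p z"

lemma bin: "binary z" using bal by (rule bal_binary)
lemma hN: "ht z (length z) = 0" using bal by (rule ht_len)
lemma a_le: "a \<le> p" and ha: "ht z a = 0" and a_nz: "\<And>k. a < k \<Longrightarrow> k \<le> p \<Longrightarrow> ht z k \<noteq> 0"
  using t0_props by auto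
lemma b_gt: "p < b" and b_le: "b \<le> length z" and hb: "ht z b = 0"
  and b_nz: "\<And>k. p < k \<Longrightarrow> k < b \<Longrightarrow> ht z k \<noteq> 0"
  using t1_props[OF plen hN] by auto
lemma ab: "a \<le> b" using a_le b_gt by simp

lemma z'_def: "z' = flipab a b z" by (simp add: flip_def)

lemma ht_z': "k \<le> length z \<Longrightarrow> ht z' k = (if a \<le> k \<and> k \<le> b then - ht z k else ht z k)"
  unfolding z'_def using ht_flipab0[OF bin _ ab ha hb] by simp

lemma ht_z'_iff: "k \<le> length z \<Longrightarrow> ht z' k = 0 \<longleftrightarrow> ht z k = 0"
  using ht_z' by simp

lemma t0_z': "t0 p z' = a"
proof -
  have "{k. k \<le> p \<and> ht z' k = 0} = {k. k \<le> p \<and> ht z k = 0}"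
    using ht_z'_iff plen by (auto)
  then show ?thesis by (simp add: t0_def)
qed

lemma t1_z': "t1 p z' = b"
proof -
  have "{k. p < k \<and> k \<le> length z' \<and> ht z' k = 0} = {k. p < k \<and> k \<le> length z \<and> ht z k = 0}"
    using ht_z'_iff by (auto simp: z'_def)
  then show ?thesis by (simp add: t1_def)
qed

lemma flip_flip: "flip p z' = z"
proof -
  have "flip p z' = flipab (t0 p z') (t1 p z') z'" by (rule flip_def)
  also have "\<dots> = flipab a b z'" using t0_z' t1_z' by simp
  also have "\<dots> = z" unfolding z'_def by (rule flipab_flipab[OF bin])
  finally show ?thesis .
qed

lemma z'_bal: "z' \<in> balanced_strings n"
proof -
  have bz: "binary z'" using bin by (simp add: z'_def flipab_binary)
  have len: "length z' = 2 * n" using bal by (simp add: z'_def balanced_strings_def)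
  have "ht z' (length z) = 0" using ht_z' hN by simp
  then have "ht z' (length z') = 0" by (simp add: z'_def)
  moreover have "(\<Sum>i<length z'. int (z' ! i)) = int (sum_list z')"
    by (simp add: sum_list_sum_nth atLeast0LessThan flip: of_nat_sum)
  ultimately have "2 * int (sum_list z') = int (length z')" by (simp add: ht_sum)
  then have "sum_list z' = n" using len by linarith
  moreover have "set z' \<subseteq> {0,1}"
  proof (rule subsetI)
    fix x assume "x \<in> set z'"
    then obtain i where "i < length z'" "x = z' ! i" by (auto simp: in_set_conv_nth)
    then have "x \<le> 1" using bz by (auto simp: binary_def)
    then show "x \<in> {0,1}" by auto
  qed
  ultimately show ?thesis using len by (simp add: balanced_strings_def)
qed

end


context setting begin

lemma ev_flip: assumes "\<not> Ev p z" shows "Ev p z'"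
proof -
  have h: "ht z' p = - ht z p" using ht_z'[of p] plen a_le b_gt by simp
  have zp: "z ! p \<le> 1" using bin plen by (simp add: binary_def)
  have "z' ! p = 1 - z ! p" using plen a_le b_gt by (simp add: z'_def flipab_nth)
  then have "int (z' ! p) = 1 - int (z ! p)" using zp by simp
  then show ?thesis using assms h by (simp add: Ev_def)
qed

lemma nz_all: "a < k \<Longrightarrow> k < b \<Longrightarrow> ht z k \<noteq> 0"
  using a_nz b_nz by (cases "k \<le> p") auto

lemma step_ht: "k < length z \<Longrightarrow> \<bar>ht z (Suc k) - ht z k\<bar> \<le> 1"
proof -
  assume "k < length z"
  then have "z ! k \<le> 1" using bin by (simp add: binary_def)
  then have "z ! k = 0 \<or> z ! k = 1" by auto
  then show ?thesis by (auto simp: ht_Suc sg_def)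
qed

lemma pos: assumes "\<not> Ev p z" shows "\<And>k. a < k \<Longrightarrow> k < b \<Longrightarrow> ht z k > 0"
proof -
  have stp: "\<And>k. a \<le> k \<Longrightarrow> k < b \<Longrightarrow> \<bar>ht z (Suc k) - ht z k\<bar> \<le> 1"
    using step_ht b_le by simp
  have start: "ht z (Suc a) > 0"
  proof (cases "a = p")
    case True
    then have "ht z p = 0" using ha by simp
    then have "z ! p \<ge> 1" using assms by (simp add: Ev_def)
    moreover have "z ! p \<le> 1" using bin plen by (simp add: binary_def)
    ultimately have "z ! p = 1" by simp
    then show ?thesis using True \<open>ht z p = 0\<close> by (simp add: ht_Suc sg_def)
  next
    case False
    then have "a < p" using a_le by simp
    then have "ht z p \<noteq> 0" using a_nz by simp
    moreover have "z ! p \<le> 1" using bin plen by (simp add: binary_def)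
    ultimately have hp: "ht z p > 0" using assms by (simp add: Ev_def)
    show ?thesis
    proof (rule ccontr)
      assume "\<not> ht z (Suc a) > 0"
      moreover have "ht z (Suc a) \<noteq> 0" using nz_all \<open>a < p\<close> b_gt by simp
      ultimately have "(\<lambda>k. - ht z k) (Suc a) > 0" by simp
      then have "(\<lambda>k. - ht z k) p > 0"
        using pos_run[of a b "\<lambda>k. - ht z k" p] stp nz_all \<open>a < p\<close> b_gt by fastforce
      then show False using hp by simp
    qed
  qed
  fix k assume "a < k" "k < b"
  then show "ht z k > 0" using pos_run[of a b "ht z" k] stp nz_all start by blast
qed

lemma aval_flip: assumes "\<not> Ev p z" shows "Aval n z \<le> Aval n z'"
proof -
  have len: "length z = 2 * n" using bal by (simp add: balanced_strings_def)
  have len': "length z' = 2 * n" using len by (simp add: z'_def)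
  have d: "\<And>i. i < 2 * n \<Longrightarrow> int (Suc i) * int (z' ! i) =
      int (Suc i) * int (z ! i) + (if i \<in> {a..<b} then - (int (Suc i) * sg z i) else 0)"
  proof -
    fix i assume "i < 2 * n"
    then have "z ! i \<le> 1" using bin len by (simp add: binary_def)
    then show "int (Suc i) * int (z' ! i) =
      int (Suc i) * int (z ! i) + (if i \<in> {a..<b} then - (int (Suc i) * sg z i) else 0)"
      using \<open>i < 2 * n\<close> len by (auto simp: z'_def flipab_nth sg_def of_nat_diff algebra_simps)
  qed
  have "(\<Sum>j = 1..2 * n. int j * int (z' ! (j - 1))) = (\<Sum>i<2 * n. int (Suc i) * int (z' ! i))"
    by (subst sum_shift1) simp
  also have "\<dots> = (\<Sum>i<2 * n. int (Suc i) * int (z ! i) + (if i \<in> {a..<b} then - (int (Suc i) * sg z i) else 0))"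
    using d by (intro sum.cong) auto
  also have "\<dots> = (\<Sum>i<2 * n. int (Suc i) * int (z ! i)) + (\<Sum>i<2 * n. (if i \<in> {a..<b} then - (int (Suc i) * sg z i) else 0))"
    by (simp add: sum.distrib)
  also have "(\<Sum>i<2 * n. (if i \<in> {a..<b} then - (int (Suc i) * sg z i) else 0)) = (\<Sum>i\<in>{..<2*n} \<inter> {a..<b}. - (int (Suc i) * sg z i))"
    by (rule sum.inter_restrict[symmetric]) simp
  also have "{..<2*n} \<inter> {a..<b} = {a..<b}" using b_le len by auto
  also have "(\<Sum>i\<in>{a..<b}. - (int (Suc i) * sg z i)) = (\<Sum>i\<in>{a..<b}. ht z i)"
    using abel[OF ab, of z] ha hb by (simp add: sum_negf)
  also have "(\<Sum>i<2 * n. int (Suc i) * int (z ! i)) = (\<Sum>j = 1..2 * n. int j * int (z ! (j - 1)))"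
    by (subst sum_shift1) simp
  finally have e: "(\<Sum>j = 1..2 * n. int j * int (z' ! (j - 1))) = (\<Sum>j = 1..2 * n. int j * int (z ! (j - 1))) + (\<Sum>i\<in>{a..<b}. ht z i)" .
  have "(\<Sum>i\<in>{a..<b}. ht z i) \<ge> 0"
  proof (rule sum_nonneg)
    fix i assume "i \<in> {a..<b}"
    then show "0 \<le> ht z i" using pos[OF assms, of i] ha by (cases "i = a") auto
  qed
  then show ?thesis using e by (simp add: Aval_def)
qed

end


lemma card_shift: fixes m :: nat and Q :: "nat \<Rightarrow> bool" shows "card {k \<in> {1..m}. Q (k - 1)} = card {i. i < m \<and> Q i}"
proof -
  have "{k \<in> {1..m}. Q (k - 1)} = Suc ` {i. i < m \<and> Q i}"
  proof (rule set_eqI)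
    fix k show "k \<in> {k \<in> {1..m}. Q (k - 1)} \<longleftrightarrow> k \<in> Suc ` {i. i < m \<and> Q i}"
      by (cases k) auto
  qed
  then show ?thesis by (simp add: card_image)
qed

lemma Collect_Suc: "{i. i < Suc m \<and> Q i} = (if Q m then insert m {i. i < m \<and> Q i} else {i. i < m \<and> Q i})"
  by (auto simp: less_Suc_eq)

lemma card_ones:
  assumes "binary z" "m \<le> length z"
  shows "int (card {i. i < m \<and> z ! i = 1}) = (\<Sum>i<m. int (z ! i))
     \<and> int (card {i. i < m \<and> z ! i = 0}) = int m - (\<Sum>i<m. int (z ! i))"
  using assms(2)
proof (induction m)
  case 0 then show ?case by simp
next
  case (Suc m)
  have "z ! m \<le> 1" using assms(1) Suc.prems by (simp add: binary_def)
  then have "z ! m = 0 \<or> z ! m = 1" by auto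
  moreover have fin: "finite {i. i < m \<and> z ! i = c}" for c by simp
  ultimately show ?case using Suc
    by (auto simp: Collect_Suc[of m] card_insert_if)
qed

lemma event_iff:
  assumes "z \<in> balanced_strings n" "w \<in> {1..2 * n}"
  shows "(card {k \<in> {1..w}. z ! (k - 1) = 1} \<le> card {k \<in> {1..w - 1}. z ! (k - 1) = 0})
     \<longleftrightarrow> Ev (w - 1) z"
proof -
  have bz: "binary z" using assms(1) by (rule bal_binary)
  have len: "length z = 2 * n" using assms(1) by (simp add: balanced_strings_def)
  let ?p = "w - 1"
  have w: "w = Suc ?p" using assms(2) by simp
  have c1: "int (card {k \<in> {1..w}. z ! (k - 1) = 1}) = (\<Sum>i<w. int (z ! i))"
    using card_ones[OF bz, of w] assms(2) len card_shift[of w "\<lambda>i. z ! i = 1"] by simp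
  have pl: "?p \<le> length z" using assms(2) len by auto
  have c0: "int (card {k \<in> {1..?p}. z ! (k - 1) = 0}) = int ?p - (\<Sum>i<?p. int (z ! i))"
    using card_ones[OF bz pl] card_shift[of ?p "\<lambda>i. z ! i = 0"] by simp
  have "(\<Sum>i<w. int (z ! i)) = (\<Sum>i<?p. int (z ! i)) + int (z ! ?p)"
    by (subst w) simp
  moreover have "Ev ?p z \<longleftrightarrow> 2 * (\<Sum>i<?p. int (z ! i)) - int ?p + int (z ! ?p) \<le> 0"
    by (simp add: Ev_def ht_sum)
  ultimately show ?thesis using c1 c0
    by (smt (verit) of_nat_le_iff)
qed

lemma bal_finite: "finite (balanced_strings n)"
proof (rule finite_subset)
  show "balanced_strings n \<subseteq> {xs. set xs \<subseteq> {0,1} \<and> length xs = 2 * n}"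
    by (auto simp: balanced_strings_def)
  show "finite {xs. set xs \<subseteq> {0::nat,1} \<and> length xs = 2 * n}"
    by (rule finite_lists_length_eq) simp
qed

lemma z0_bal: "replicate n 0 @ replicate n 1 \<in> balanced_strings n"
  by (auto simp: balanced_strings_def sum_list_replicate)

theorem mainTheorem6:
  fixes n w :: nat and q :: real
  assumes "n \<ge> 1" and "0 \<le> q" and "q \<le> 1" and "w \<in> {1..2 * n}"
  shows "mu q n (\<lambda>z. card {k \<in> {1..w}. z ! (k - 1) = 1}
                      \<le> card {k \<in> {1..w - 1}. z ! (k - 1) = 0}) \<ge> 1 / 2"
proof -
  define P where "P = (\<lambda>z::nat list. card {k \<in> {1..w}. z ! (k - 1) = 1}
                      \<le> card {k \<in> {1..w - 1}. z ! (k - 1) = 0})"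
  have eqP: "(\<lambda>z::nat list. card {k \<in> {1..w}. z ! (k - 1) = 1}
                      \<le> card {k \<in> {1..w - 1}. z ! (k - 1) = 0}) = P" unfolding P_def ..
  show ?thesis
  proof (cases "q = 0")
    case True
    define z0 where "z0 = (replicate n 0 @ replicate n (1::nat))"
    have w: "1 \<le> w" "w \<le> 2 * n" using assms(4) by auto
    have s1: "{k \<in> {1..w}. z0 ! (k - 1) = 1} \<subseteq> {n+1..w}"
      by (auto simp: z0_def nth_append split: if_splits)
    have s2: "{1..min n (w - 1)} \<subseteq> {k \<in> {1..w - 1}. z0 ! (k - 1) = 0}"
      by (auto simp: z0_def nth_append)
    have "card {k \<in> {1..w}. z0 ! (k - 1) = 1} \<le> w - n"
      using card_mono[OF _ s1] by simp
    moreover have "min n (w - 1) \<le> card {k \<in> {1..w - 1}. z0 ! (k - 1) = 0}"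
      using card_mono[OF _ s2] by simp
    moreover have "w - n \<le> min n (w - 1)"
    proof -
      have "w - n \<le> n" using w by linarith
      moreover have "w - n \<le> w - 1" using assms(1) by linarith
      ultimately show ?thesis by simp
    qed
    ultimately have "P z0" unfolding P_def by linarith
    then have Pz: "P (replicate n 0 @ replicate n 1)" by (simp only: z0_def)
    have "mu q n P = 1" by (simp only: mu_def if_P[OF True] if_P[OF Pz])
    then show ?thesis unfolding eqP by simp
  next
    case False
    then have q0: "0 < q" using assms(2) by simp
    define W where "W = (\<lambda>z. q powi (- 2 * Aval n z))"
    define B where "B = balanced_strings n"
    define p where "p = w - 1"
    define Es where "Es = {z \<in> B. P z}"
    define Cs where "Cs = {z \<in> B. \<not> P z}"
    have finB: "finite B" unfolding B_def by (rule bal_finite)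
    have Wpos: "\<And>z. 0 < W z" unfolding W_def using q0 by simp
    have PE: "\<And>z. z \<in> B \<Longrightarrow> P z \<longleftrightarrow> Ev p z"
      unfolding P_def p_def B_def using event_iff assms(4) by blast
    have plen: "\<And>z. z \<in> B \<Longrightarrow> p < length z"
      using assms(4) by (auto simp: B_def balanced_strings_def p_def)
    have into: "flip p ` Cs \<subseteq> Es"
    proof
      fix y assume "y \<in> flip p ` Cs"
      then obtain z where z: "z \<in> Cs" "y = flip p z" by auto
      then have zB: "z \<in> B" and nP: "\<not> P z" by (auto simp: Cs_def)
      interpret setting n p z using zB plen[OF zB] by unfold_locales (auto simp: B_def)
      have "flip p z \<in> B" using z'_bal by (simp add: B_def)
      moreover have "Ev p (flip p z)" using ev_flip nP PE[OF zB] by simp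
      ultimately show "y \<in> Es" using z PE by (auto simp: Es_def)
    qed
    have inj: "inj_on (flip p) Cs"
    proof (rule inj_on_inverseI)
      fix z assume "z \<in> Cs"
      then have zB: "z \<in> B" by (simp add: Cs_def)
      interpret setting n p z using zB plen[OF zB] by unfold_locales (auto simp: B_def)
      show "flip p (flip p z) = z" by (rule flip_flip)
    qed
    have Wmono: "\<And>z. z \<in> Cs \<Longrightarrow> W z \<le> W (flip p z)"
    proof -
      fix z assume "z \<in> Cs"
      then have zB: "z \<in> B" and nP: "\<not> P z" by (auto simp: Cs_def)
      interpret setting n p z using zB plen[OF zB] by unfold_locales (auto simp: B_def)
      have "Aval n z \<le> Aval n (flip p z)" using aval_flip nP PE[OF zB] by simp
      then have "- 2 * Aval n (flip p z) \<le> - 2 * Aval n z" by simp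
      then show "W z \<le> W (flip p z)" unfolding W_def
        using power_int_decreasing[of "- 2 * Aval n (flip p z)" "- 2 * Aval n z" q] q0 assms(3) by simp
    qed
    have "sum W Cs \<le> sum (W \<circ> flip p) Cs" using Wmono by (intro sum_mono) auto
    also have "\<dots> = sum W (flip p ` Cs)" using sum.reindex[OF inj, of W] by simp
    also have "\<dots> \<le> sum W Es"
      using into finB Wpos by (intro sum_mono2) (auto simp: Es_def less_imp_le)
    finally have CE: "sum W Cs \<le> sum W Es" .
    have BU: "B = Es \<union> Cs" "Es \<inter> Cs = {}" by (auto simp: Es_def Cs_def)
    have fE: "finite Es" and fC: "finite Cs" using finB by (auto simp: Es_def Cs_def)
    have "sum W (Es \<union> Cs) = sum W Es + sum W Cs"
      by (rule sum.union_disjoint[OF fE fC BU(2)])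
    then have tot: "sum W B = sum W Es + sum W Cs" by (simp only: BU(1)[symmetric])
    have "replicate n 0 @ replicate n 1 \<in> B" unfolding B_def by (rule z0_bal)
    then have pos: "0 < sum W B" using finB Wpos by (intro sum_pos2[of B _ W]) (auto simp: less_imp_le)
    have m: "mu q n P = sum W Es / sum W B"
      using False by (simp add: mu_def W_def B_def Es_def)
    have "sum W B \<le> 2 * sum W Es" using CE tot by linarith
    then have "1 / 2 \<le> sum W Es / sum W B" using pos by (simp add: field_simps)
    then show ?thesis unfolding eqP m .
  qed
qed

end
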